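(* For all integers $n$ define $B(n)=\sum_{k\in\mathbb{Z}}\binom{n}{k}^2\binom{n+k}{k}$. Then for all integers $n>0$, $B(-n) = (-1)^{n-1}B(n-1)$.
   Context: For all integers $n, k$, the binomial coefficient is defined by $\binom{n}{k} = \lim_{z \to 0} \frac{\Gamma(z+n+1)}{\Gamma(z+k+1)\Gamma(z+n-k+1)}$; this is a finite integer for all $n,k\in\mathbb{Z}$, agrees with the usual one for $n\ge0$, and satisfies $\binom{n}{k}=\binom{n}{n-k}$. For $n \ge 0$, $B(n)=\sum_{k=0}^n\binom{n}{k}^2\binom{n+k}{k}$. *)

theory Defs
  imports "HOL-Analysis.Analysis"
begin

definition gbinom :: "int \<Rightarrow> int \<Rightarrow> real" where
  "gbinom n k = Lim (at (0::real))
     (\<lambda>z. Gamma (z + of_int n + 1) / (Gamma (z + of_int k + 1) * Gamma (z + of_int n - of_int k + 1)))"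

definition Bsum :: "int \<Rightarrow> real" where
  "Bsum n = (\<Sum>\<^sub>\<infinity> k\<in>(UNIV::int set). (gbinom n k)^2 * gbinom (n + k) k)"

end

theory Submission
  imports Defs
begin

definition ne :: "int \<Rightarrow> nat" where "ne a = (if a < 0 then 1 else 0)"
definition H :: "int \<Rightarrow> real \<Rightarrow> real" where
  "H a z = (if a \<ge> 0 then pochhammer (z+1) (nat a) else inverse (pochhammer (z + of_int a + 1) (nat (-a) - 1)))"

lemma notint_nonpos: "(z::real) \<notin> \<int> \<Longrightarrow> z + of_int a \<notin> \<int>\<^sub>\<le>\<^sub>0"
  by (metis Ints_diff Ints_of_int add_diff_cancel_right' nonpos_Ints_subset_Ints subsetD)

lemma Gamma_split:
  fixes z :: real assumes z: "z \<notin> \<int>"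
  shows "Gamma (z + of_int a + 1) = Gamma (z+1) * H a z / z ^ ne a"
proof (cases "a \<ge> 0")
  case True
  have nz: "z + 1 \<notin> \<int>\<^sub>\<le>\<^sub>0" using notint_nonpos[OF z, of 1] by simp
  have "pochhammer (z+1) (nat a) = Gamma (z + 1 + of_nat (nat a)) / Gamma (z+1)"
    by (rule pochhammer_Gamma[OF nz])
  moreover have "Gamma (z+1) \<noteq> 0" using nz Gamma_eq_zero_iff by blast
  ultimately show ?thesis using True by (simp add: H_def ne_def field_simps)
next
  case False
  define d where "d = nat (-a) - 1"
  have a: "of_int a = - (of_nat d :: real) - 1" using False by (simp add: d_def)
  have nz: "z + of_int a + 1 \<notin> \<int>\<^sub>\<le>\<^sub>0" using notint_nonpos[OF z, of "a+1"] by (simp add: add.assoc)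
  have "pochhammer (z + of_int a + 1) (Suc d) = Gamma (z + of_int a + 1 + of_nat (Suc d)) / Gamma (z + of_int a + 1)"
    by (rule pochhammer_Gamma[OF nz])
  moreover have "z + of_int a + 1 + of_nat (Suc d) = z + 1" using a by simp
  moreover have "pochhammer (z + of_int a + 1) (Suc d) = pochhammer (z + of_int a + 1) d * z"
    using a by (simp add: pochhammer_Suc)
  moreover have "Gamma (z + of_int a + 1) \<noteq> 0" using nz Gamma_eq_zero_iff by blast
  moreover have "z \<noteq> 0" using z by auto
  moreover have "Gamma (z+1) \<noteq> 0" using notint_nonpos[OF z, of 1] Gamma_eq_zero_iff[of "z+1"] by simp
  ultimately show ?thesis using False by (simp add: H_def ne_def d_def field_simps)
qed

lemma H_cont: "isCont (H a) 0"
proof (cases "a \<ge> 0")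
  case True
  have "isCont (\<lambda>z. pochhammer (z + 1 :: real) (nat a)) 0"
    by (rule continuous_at_compose[OF _ isCont_pochhammer, unfolded o_def]) (intro continuous_intros)
  then show ?thesis using True unfolding H_def by simp
next
  case False
  define d where "d = nat (-a) - 1"
  have a: "of_int a + 1 = - (of_nat d :: real)" using False by (simp add: d_def)
  have "pochhammer (0 + of_int a + 1 :: real) d \<noteq> 0"
    using a by (auto simp: pochhammer_eq_0_iff)
  moreover have "isCont (\<lambda>z. pochhammer (z + of_int a + 1 :: real) d) 0"
    by (rule continuous_at_compose[OF _ isCont_pochhammer, unfolded o_def]) (intro continuous_intros)
  ultimately have "isCont (\<lambda>z. inverse (pochhammer (z + of_int a + 1 :: real) d)) 0"
    by (intro continuous_intros) auto
  then show ?thesis using False unfolding H_def d_def by simp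
qed

lemma H0: "H a 0 = (if a \<ge> 0 then fact (nat a) else inverse ((-1) ^ (nat (-a) - 1) * fact (nat (-a) - 1)))"
proof (cases "a \<ge> 0")
  case True then show ?thesis by (simp add: H_def pochhammer_fact)
next
  case False
  define d where "d = nat (-a) - 1"
  have a: "of_int a + 1 = - (of_nat d :: real)" using False by (simp add: d_def)
  have "pochhammer (- (of_nat d) :: real) d = (-1)^d * fact d"
    by (simp add: pochhammer_minus pochhammer_fact)
  then show ?thesis using False a unfolding H_def d_def by simp
qed

lemma H_nz: assumes z: "(z::real) \<notin> \<int>" shows "H a z \<noteq> 0"
proof -
  have "pochhammer (z + of_int b) m \<noteq> 0" for b m
  proof
    assume "pochhammer (z + of_int b) m = 0"
    then obtain j where "z + of_int b = - of_nat j" by (auto simp: pochhammer_eq_0_iff)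
    hence "z = of_int (- int j - b)" by simp
    thus False using z by (metis Ints_of_int)
  qed
  from this[of 1] this[of "a+1"] show ?thesis unfolding H_def by (auto simp: add.assoc)
qed

lemma small_notint: assumes "(z::real) \<noteq> 0" "\<bar>z\<bar> < 1" shows "z \<notin> \<int>"
proof
  assume "z \<in> \<int>" then obtain m where m: "z = of_int m" by (auto elim: Ints_cases)
  with assms have "m \<noteq> 0" "\<bar>m\<bar> < 1" by auto
  thus False by auto
qed

lemma gbinom_eq:
  "gbinom n k = (if ne k + ne (n-k) = ne n then H n 0 / (H k 0 * H (n-k) 0) else 0)"
proof -
  have le: "ne n \<le> ne k + ne (n-k)" by (auto simp: ne_def)
  define e where "e = ne k + ne (n-k) - ne n"
  define R where "R z = H n z / (Gamma (z+1) * H k z * H (n-k) z)" for z :: real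
  define E where "E z = Gamma (z + of_int n + 1) / (Gamma (z + of_int k + 1) * Gamma (z + of_int n - of_int k + 1))" for z :: real
  have ev0: "\<forall>z. z \<noteq> 0 \<and> dist z 0 < 1 \<longrightarrow> E z = z^e * R z"
  proof (intro allI impI)
    fix z :: real assume "z \<noteq> 0 \<and> dist z 0 < 1"
    hence z: "z \<notin> \<int>" "z \<noteq> 0" using small_notint by auto
    have G: "Gamma (z+1) \<noteq> 0" using notint_nonpos[OF z(1), of 1] Gamma_eq_zero_iff[of "z+1"] by simp
    have e1: "z + of_int n - of_int k + 1 = z + of_int (n-k) + 1" by simp
    have pw: "z ^ (ne k + ne (n-k)) = z^e * z ^ ne n" using le by (simp add: e_def flip: power_add)
    show "E z = z^e * R z"
      unfolding E_def R_def e1 Gamma_split[OF z(1)]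
      using G H_nz[OF z(1), of k] H_nz[OF z(1), of "n-k"] z(2) pw
      by (simp add: field_simps power_add)
  qed
  have ev: "eventually (\<lambda>z. E z = z^e * R z) (at 0)"
    unfolding eventually_at using ev0 by (intro exI[of _ 1]) auto
  have Hk: "H k 0 \<noteq> 0" "H (n-k) 0 \<noteq> 0" by (auto simp: H0)
  have "isCont (\<lambda>z. z^e * R z) 0"
    unfolding R_def using Hk
    by (intro continuous_intros H_cont isCont_Gamma) auto
  hence "((\<lambda>z. z^e * R z) \<longlongrightarrow> 0^e * R 0) (at 0)" by (simp add: isCont_def)
  moreover have "eventually (\<lambda>z. z^e * R z = E z) (at 0)" using ev by (simp add: eq_commute)
  ultimately have "(E \<longlongrightarrow> 0^e * R 0) (at 0)" by (rule Lim_transform_eventually)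
  hence "gbinom n k = 0^e * R 0" unfolding gbinom_def E_def by (intro tendsto_Lim) auto
  thus ?thesis using le by (auto simp: R_def e_def)
qed

lemma gb_pos: assumes "n \<ge> 0"
  shows "gbinom n k = (if 0 \<le> k \<and> k \<le> n then real (nat n choose nat k) else 0)"
proof -
  have "0 \<le> k \<Longrightarrow> k \<le> n \<Longrightarrow> fact (nat n) / (fact (nat k) * fact (nat (n-k))) = real (nat n choose nat k)"
    by (subst binomial_fact) (auto simp: nat_diff_distrib)
  thus ?thesis using assms by (auto simp: gbinom_eq ne_def H0)
qed

lemma gb_negk: assumes "m < 0" "k \<ge> 0"
  shows "gbinom m k = (-1) ^ nat k * real ((nat (-m) - 1 + nat k) choose nat k)"
proof -
  define d where "d = nat (-m) - 1"
  have d1: "nat (- (m - k)) - 1 = d + nat k" using assms by (simp add: d_def)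
  have "H m 0 / (H k 0 * H (m-k) 0) = inverse ((-1)^d * fact d) / (fact (nat k) * inverse ((-1)^(d + nat k) * fact (d + nat k)))"
    using assms d1 by (simp add: H0 d_def)
  also have "\<dots> = (-1) ^ nat k * (fact (d + nat k) / (fact (nat k) * fact d))"
    by (simp add: field_simps power_add)
  also have "fact (d + nat k) / (fact (nat k) * fact d) = real ((d + nat k) choose nat k)"
    by (subst binomial_fact) auto
  finally have X: "H m 0 / (H k 0 * H (m-k) 0) = (-1) ^ nat k * real ((d + nat k) choose nat k)" .
  have "ne k + ne (m-k) = ne m" using assms by (simp add: ne_def)
  hence "gbinom m k = H m 0 / (H k 0 * H (m-k) 0)" by (simp only: gbinom_eq if_True refl)
  thus ?thesis using X unfolding d_def by (rule trans)
qed

lemma gb_neg_negk: assumes "m < 0" "k < 0" "m + k < 0"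
  shows "gbinom m k ^ 2 * gbinom (m + k) k = 0"
proof -
  have "gbinom (m + k) k = 0" using assms by (simp add: gbinom_eq ne_def)
  thus ?thesis by simp
qed

lemma infsum_fin:
  assumes "finite A" "\<And>k. k \<notin> int ` A \<Longrightarrow> f k = 0"
  shows "infsum f (UNIV :: int set) = (\<Sum>k\<in>A. f (int k))"
proof -
  have "infsum f UNIV = infsum f (int ` A)"
    by (rule infsum_cong_neutral) (use assms in auto)
  also have "\<dots> = sum f (int ` A)" using assms by simp
  also have "\<dots> = (\<Sum>k\<in>A. f (int k))" by (simp add: sum.reindex)
  finally show ?thesis .
qed

lemma Bsum_pos: assumes "N \<ge> 0"
  shows "Bsum N = (\<Sum>k\<le>nat N. real (nat N choose k) ^ 2 * real ((nat N + k) choose k))"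
proof -
  have "Bsum N = (\<Sum>k\<le>nat N. gbinom N (int k) ^ 2 * gbinom (N + int k) (int k))"
    unfolding Bsum_def
  proof (rule infsum_fin)
    fix k assume "k \<notin> int ` {..nat N}"
    have "k < 0 \<or> k > N"
    proof (rule ccontr)
      assume "\<not> (k < 0 \<or> k > N)"
      hence "k = int (nat k)" "nat k \<in> {..nat N}" by auto
      thus False using \<open>k \<notin> int ` {..nat N}\<close> by blast
    qed
    thus "gbinom N k ^ 2 * gbinom (N + k) k = 0" using assms by (auto simp: gb_pos)
  qed auto
  also have "\<dots> = (\<Sum>k\<le>nat N. real (nat N choose k) ^ 2 * real ((nat N + k) choose k))"
    using assms by (intro sum.cong refl) (auto simp: gb_pos nat_add_distrib)
  finally show ?thesis .
qed

lemma Bsum_neg: assumes "n > 0"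
  shows "Bsum (-n) = (\<Sum>k\<le>nat n - 1. (-1)^k * real ((nat n - 1 + k) choose k) ^ 2 * real ((nat n - 1) choose k))"
proof -
  have "Bsum (-n) = (\<Sum>k\<le>nat n - 1. gbinom (-n) (int k) ^ 2 * gbinom (-n + int k) (int k))"
    unfolding Bsum_def
  proof (rule infsum_fin)
    fix k assume k: "k \<notin> int ` {..nat n - 1}"
    show "gbinom (-n) k ^ 2 * gbinom (-n + k) k = 0"
    proof (cases "k < 0")
      case True
      then show ?thesis using assms gb_neg_negk[of "-n" k] by auto
    next
      case False
      have "k \<ge> n"
      proof (rule ccontr)
        assume "\<not> k \<ge> n"
        hence "k = int (nat k)" "nat k \<in> {..nat n - 1}" using False by auto
        thus False using k by blast
      qed
      then show ?thesis using assms by (auto simp: gb_pos)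
    qed
  qed auto
  also have "\<dots> = (\<Sum>k\<le>nat n - 1. (-1)^k * real ((nat n - 1 + k) choose k) ^ 2 * real ((nat n - 1) choose k))"
  proof (intro sum.cong refl)
    fix k assume k: "k \<in> {..nat n - 1}"
    have a: "gbinom (-n) (int k) = (-1)^k * real ((nat n - 1 + k) choose k)"
      using assms by (simp add: gb_negk)
    have b: "gbinom (-n + int k) (int k) = (-1)^k * real ((nat n - 1) choose k)"
    proof -
      have eq: "nat (-(-n + int k)) - 1 + k = nat n - 1" using k assms by auto
      have "gbinom (-n + int k) (int k) = (-1)^(nat (int k)) * real ((nat (-(-n + int k)) - 1 + nat (int k)) choose nat (int k))"
        by (rule gb_negk) (use k assms in auto)
      thus ?thesis by (simp only: eq nat_int)
    qed
    show "gbinom (-n) (int k) ^ 2 * gbinom (-n + int k) (int k) = (-1)^k * real ((nat n - 1 + k) choose k) ^ 2 * real ((nat n - 1) choose k)"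
    proof -
      have s: "((-1::real)^k)^2 = 1" by (induct k) (auto simp: power2_eq_square)
      show ?thesis unfolding a b power_mult_distrib s by simp
    qed
  qed
  finally show ?thesis .
qed

definition S :: "nat \<Rightarrow> nat \<Rightarrow> nat \<Rightarrow> real" where
  "S M a b = (\<Sum>i\<le>M. (-1)^i * real (M choose i) * real ((a+i) choose b))"

lemma S_rec: "S (Suc M) a b = S M a b - S M (Suc a) b"
proof -
  define T where "T = (\<Sum>i\<le>M. (-1)^(Suc i) * real (M choose Suc i) * real ((a + Suc i) choose b))"
  have A: "(\<Sum>i\<le>Suc M. (-1)^i * real (M choose i) * real ((a+i) choose b)) = S M a b"
    by (simp add: sum.atMost_Suc S_def)
  have B: "(\<Sum>i\<le>Suc M. (-1)^i * real (M choose i) * real ((a+i) choose b)) = real (a choose b) + T"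
    unfolding T_def by (subst sum.atMost_Suc_shift) simp
  have C: "S (Suc M) a b = real (a choose b) + (\<Sum>i\<le>M. (-1)^(Suc i) * real (Suc M choose Suc i) * real ((a + Suc i) choose b))"
    unfolding S_def by (subst sum.atMost_Suc_shift) simp
  also have "(\<Sum>i\<le>M. (-1)^(Suc i) * real (Suc M choose Suc i) * real ((a + Suc i) choose b))
     = T - S M (Suc a) b"
    unfolding T_def S_def sum_subtractf[symmetric]
    by (intro sum.cong refl) (simp add: algebra_simps)
  finally show ?thesis using A B by simp
qed

lemma S_closed: "M \<le> b \<Longrightarrow> S M a b = (-1)^M * real (a choose (b - M))"
proof (induction M arbitrary: a b)
  case 0 then show ?case by (simp add: S_def)
next
  case (Suc M)
  obtain c where c: "b - M = Suc c" "b - Suc M = c" using Suc.prems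
    by (metis Suc_diff_le Suc_leD diff_Suc_Suc)
  have "S (Suc M) a b = (-1)^M * real (a choose Suc c) - (-1)^M * real (Suc a choose Suc c)"
    using Suc by (simp add: S_rec c)
  also have "\<dots> = (-1)^Suc M * real (a choose c)" by (simp add: algebra_simps)
  finally show ?case by (simp add: c)
qed

lemma vand: assumes "k \<le> N"
  shows "real ((N + k) choose k) = (\<Sum>j\<le>N. real (N choose j) * real (k choose j))"
proof -
  have "(N + k) choose k = (\<Sum>j\<le>k. (N choose j) * (k choose (k - j)))"
    by (rule vandermonde[symmetric])
  also have "\<dots> = (\<Sum>j\<le>k. (N choose j) * (k choose j))"
    by (intro sum.cong refl) (metis atMost_iff binomial_symmetric)
  also have "\<dots> = (\<Sum>j\<le>N. (N choose j) * (k choose j))"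
    by (rule sum.mono_neutral_left) (use assms in auto)
  finally show ?thesis by (simp flip: of_nat_mult of_nat_sum)
qed

lemma inner: assumes "j \<le> N"
  shows "(\<Sum>k\<le>N. (-1)^k * real ((N + k) choose k) * real (N choose k) * real (k choose j))
       = (-1)^N * real (N choose j) * real ((N + j) choose j)"
proof -
  define f where "f k = (-1)^k * real ((N + k) choose k) * real (N choose k) * real (k choose j)" for k
  have "(\<Sum>k\<le>N. f k) = (\<Sum>k\<in>{j..N}. f k)"
    by (rule sum.mono_neutral_right) (auto simp: f_def)
  also have "{j..N} = {0 + j..(N - j) + j}" using assms by simp
  also have "sum f \<dots> = (\<Sum>i\<in>{0..N-j}. f (i + j))" by (rule sum.shift_bounds_cl_nat_ivl)
  also have "\<dots> = (\<Sum>i\<le>N-j. (-1)^j * real (N choose j) * ((-1)^i * real ((N - j) choose i) * real (((N + j) + i) choose N)))"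
  proof (intro sum.cong)
    fix i assume i: "i \<in> {..N-j}"
    have 1: "(N choose (i + j)) * ((i + j) choose j) = (N choose j) * ((N - j) choose i)"
      using choose_mult[of j "i+j" N] i assms by simp
    have 2: "(N + (i + j)) choose (i + j) = ((N + j) + i) choose N"
      using binomial_symmetric[of "i+j" "N + (i+j)"] by (simp add: add_ac)
    have "f (i + j) = (-1)^(i+j) * real ((N + (i + j)) choose (i + j)) * real ((N choose (i + j)) * ((i + j) choose j))"
      by (simp add: f_def)
    also have "\<dots> = (-1)^(i+j) * real (((N + j) + i) choose N) * real ((N choose j) * ((N - j) choose i))"
      by (simp only: 1 2)
    finally show "f (i + j) = (-1)^j * real (N choose j) * ((-1)^i * real ((N - j) choose i) * real (((N + j) + i) choose N))"
      by (simp add: power_add)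
  qed (auto simp: atLeast0AtMost)
  also have "\<dots> = (-1)^j * real (N choose j) * S (N - j) (N + j) N"
    by (simp add: S_def sum_distrib_left)
  also have "\<dots> = (-1)^j * real (N choose j) * ((-1)^(N-j) * real ((N + j) choose j))"
    using assms by (simp add: S_closed)
  also have "\<dots> = (-1)^(j + (N - j)) * real (N choose j) * real ((N + j) choose j)"
    by (simp add: power_add)
  finally show ?thesis using assms by (simp add: f_def)
qed

lemma comb: "(\<Sum>k\<le>N. (-1)^k * real ((N + k) choose k) ^ 2 * real (N choose k))
   = (-1)^N * (\<Sum>k\<le>N. real (N choose k) ^ 2 * real ((N + k) choose k))"
proof -
  have "(\<Sum>k\<le>N. (-1)^k * real ((N + k) choose k) ^ 2 * real (N choose k))
     = (\<Sum>k\<le>N. \<Sum>j\<le>N. real (N choose j) * ((-1)^k * real ((N + k) choose k) * real (N choose k) * real (k choose j)))"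
  proof (intro sum.cong refl)
    fix k assume "k \<in> {..N}"
    hence hv: "real ((N + k) choose k) = (\<Sum>j\<le>N. real (N choose j) * real (k choose j))" by (intro vand) auto
    have e: "(\<Sum>j\<le>N. real (N choose j) * ((-1)^k * real ((N + k) choose k) * real (N choose k) * real (k choose j)))
       = ((-1)^k * real ((N + k) choose k) * real (N choose k)) * (\<Sum>j\<le>N. real (N choose j) * real (k choose j))"
      by (simp add: sum_distrib_left mult_ac)
    show "(-1)^k * real ((N + k) choose k) ^ 2 * real (N choose k) = (\<Sum>j\<le>N. real (N choose j) * ((-1)^k * real ((N + k) choose k) * real (N choose k) * real (k choose j)))"
      unfolding e hv[symmetric] by (simp add: power2_eq_square)
  qed
  also have "\<dots> = (\<Sum>j\<le>N. real (N choose j) * (\<Sum>k\<le>N. (-1)^k * real ((N + k) choose k) * real (N choose k) * real (k choose j)))"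
    by (subst sum.swap) (simp add: sum_distrib_left)
  also have "\<dots> = (\<Sum>j\<le>N. real (N choose j) * ((-1)^N * real (N choose j) * real ((N + j) choose j)))"
    by (intro sum.cong refl) (simp add: inner)
  also have "\<dots> = (-1)^N * (\<Sum>k\<le>N. real (N choose k) ^ 2 * real ((N + k) choose k))"
    by (simp add: sum_distrib_left power2_eq_square algebra_simps)
  finally show ?thesis .
qed

theorem mainTheorem7:
  fixes n :: int
  assumes "n > 0"
  shows "Bsum (- n) = (-1) ^ nat (n - 1) * Bsum (n - 1)"
proof -
  define M where "M = nat n - 1"
  have N: "nat (n - 1) = M" using assms by (simp add: M_def)
  have a: "Bsum (-n) = (\<Sum>k\<le>M. (-1)^k * real ((M + k) choose k) ^ 2 * real (M choose k))"
    unfolding M_def by (rule Bsum_neg[OF assms])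
  have b: "Bsum (n - 1) = (\<Sum>k\<le>M. real (M choose k) ^ 2 * real ((M + k) choose k))"
    using Bsum_pos[of "n-1"] assms unfolding N by simp
  show ?thesis unfolding a b N by (rule comb)
qed

end
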